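(* For pairs of reals write $(a,b) \succeq (a',b')$ if $a \ge a'$ and $a+b \ge a'+b'$. Let $a,b,c,d,a',b',c',d'$ be nonnegative reals with $a' \ge b'$ and $c' \ge d'$. If $(a,b) \succeq (a',b')$ and $(c,d) \succeq (c',d')$, then $(ac,bd) \succeq (a'c',b'd')$. *)

theory Defs
  imports Main "HOL.Real"
begin

definition pair_dom :: "real \<times> real \<Rightarrow> real \<times> real \<Rightarrow> bool" where
  "pair_dom p q \<longleftrightarrow> fst p \<ge> fst q \<and> fst p + snd p \<ge> fst q + snd q"

end

theory Submission
  imports Defs
begin

theorem lemma4p5:
  fixes a b c d a' b' c' d' :: real
  assumes "a \<ge> 0" "b \<ge> 0" "c \<ge> 0" "d \<ge> 0"
    and "a' \<ge> 0" "b' \<ge> 0" "c' \<ge> 0" "d' \<ge> 0"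
    and "a' \<ge> b'" "c' \<ge> d'"
    and "pair_dom (a, b) (a', b')" "pair_dom (c, d) (c', d')"
  shows "pair_dom (a * c, b * d) (a' * c', b' * d')"
proof -
  have h1: "a \<ge> a'" "a + b \<ge> a' + b'" "c \<ge> c'" "c + d \<ge> c' + d'"
    using assms(11,12) by (auto simp: pair_dom_def)
  have m: "a * c \<ge> a' * c'" using h1 assms by (simp add: mult_mono)
  have s: "a * c + b * d \<ge> a' * c' + b' * d'"
  proof (cases "c \<ge> d")
    case True
    have "a * (c - d) \<ge> a' * (c - d)" using h1 True by (simp add: mult_right_mono)
    moreover have "(a + b) * d \<ge> (a' + b') * d" using h1 assms by (simp add: mult_right_mono)
    moreover have "(c - c') * (a' - b') \<ge> 0" using h1 assms by simp
    moreover have "b' * ((c + d) - (c' + d')) \<ge> 0" using h1 assms by simp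
    ultimately show ?thesis by (simp add: algebra_simps)
  next
    case False
    have "(a + b) * c \<ge> (a' + b') * c" using h1 assms by (simp add: mult_right_mono)
    moreover have "b * (d - c) \<ge> 0" using False assms by simp
    moreover have "a' * (c - c') \<ge> 0" using h1 assms by simp
    moreover have "b' * (c - d') \<ge> 0" using h1 assms by simp
    ultimately show ?thesis by (simp add: algebra_simps)
  qed
  show ?thesis using m s by (simp add: pair_dom_def)
qed

end
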